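(* Let $m\ge2$, $w$ an infinite periodic or Sturmian word over $\{0,1\}$, and $A=A(m,w)$ with the $\mathbb{Z}_2$-grading in which $z_1^{(1)},a$ are even and $b$ is odd. Then there is $n_0$ such that $c_{k,n-k}(A)\le 2n^2$ for all $n\ge n_0$ and all $0\le k\le n$.
   Context: $F$ is a field of characteristic zero. $A(m,w)$: basis $\{a,b,z_j^{(i)}: i\ge1,1\le j\le m+w_i\}$, products $z_j^{(i)}a=z_{j+1}^{(i)}$ for $j<m+w_i$, $z_{m+w_i}^{(i)}b=z_1^{(i+1)}$, all other products zero. The grading: $A_0=\mathrm{span}\{a,z_j^{(i)}:i\text{ odd}\}$, $A_1=\mathrm{span}\{b,z_j^{(i)}:i\text{ even}\}$. Sturmian: exactly $n+1$ distinct subwords of length $n$ for all $n$. $c_{k,n-k}(A)=\dim P_{k,n-k}/(P_{k,n-k}\cap Id^{gr}(A))$, where $P_{k,n-k}$ is the space of polynomials in the free nonassociative algebra multilinear in even variables $x_1,\dots,x_k$ and odd variables $y_1,\dots,y_{n-k}$, and $Id^{gr}(A)$ is the ideal of graded identities of $A$ (polynomials vanishing whenever even variables take values in $A_0$ and odd in $A_1$). *)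

theory Defs
  imports Main "HOL-Library.Multiset"
begin

text \<open>Basis indices: a, b, and z_j^(i) (written Z i j).\<close>
datatype bidx = Ba | Bb | Z nat nat

definition valid_basis :: "nat \<Rightarrow> (nat \<Rightarrow> nat) \<Rightarrow> bidx \<Rightarrow> bool" where
  "valid_basis m w s = (case s of Ba \<Rightarrow> True | Bb \<Rightarrow> True
      | Z i j \<Rightarrow> 1 \<le> i \<and> 1 \<le> j \<and> j \<le> m + w i)"

text \<open>Product of basis elements (None means the product is zero).\<close>
fun bprod :: "nat \<Rightarrow> (nat \<Rightarrow> nat) \<Rightarrow> bidx \<Rightarrow> bidx \<Rightarrow> bidx option" where
  "bprod m w (Z i j) Ba = (if j < m + w i then Some (Z i (j + 1)) else None)"
| "bprod m w (Z i j) Bb = (if j = m + w i then Some (Z (i + 1) 1) else None)"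
| "bprod m w _ _ = None"

definition supp :: "(bidx \<Rightarrow> 'f::field) \<Rightarrow> bidx set" where
  "supp u = {s. u s \<noteq> 0}"

definition Aelem :: "nat \<Rightarrow> (nat \<Rightarrow> nat) \<Rightarrow> (bidx \<Rightarrow> 'f::field) set" where
  "Aelem m w = {u. finite (supp u) \<and> (\<forall>s\<in>supp u. valid_basis m w s)}"

definition amult :: "nat \<Rightarrow> (nat \<Rightarrow> nat) \<Rightarrow> (bidx \<Rightarrow> 'f::field) \<Rightarrow> (bidx \<Rightarrow> 'f) \<Rightarrow> (bidx \<Rightarrow> 'f)" where
  "amult m w u v = (\<lambda>t. \<Sum>(s, r) \<in> supp u \<times> supp v.
      if bprod m w s r = Some t then u s * v r else 0)"

definition A0 :: "nat \<Rightarrow> (nat \<Rightarrow> nat) \<Rightarrow> (bidx \<Rightarrow> 'f::field) set" where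
  "A0 m w = {u \<in> Aelem m w. \<forall>s\<in>supp u. s = Ba \<or> (\<exists>i j. s = Z i j \<and> odd i)}"

definition A1 :: "nat \<Rightarrow> (nat \<Rightarrow> nat) \<Rightarrow> (bidx \<Rightarrow> 'f::field) set" where
  "A1 m w = {u \<in> Aelem m w. \<forall>s\<in>supp u. s = Bb \<or> (\<exists>i j. s = Z i j \<and> even i)}"

definition binary_word :: "(nat \<Rightarrow> nat) \<Rightarrow> bool" where
  "binary_word w = (\<forall>i\<ge>1. w i \<in> {0, 1})"

text \<open>The word is w_1 w_2 w_3 ... (index 0 unused).\<close>
definition periodic_word :: "(nat \<Rightarrow> nat) \<Rightarrow> bool" where
  "periodic_word w = (\<exists>p>0. \<forall>i\<ge>1. w (i + p) = w i)"

definition subwords :: "(nat \<Rightarrow> nat) \<Rightarrow> nat \<Rightarrow> nat list set" where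
  "subwords w n = {map w [i..<i + n] | i. i \<ge> 1}"

definition sturmian :: "(nat \<Rightarrow> nat) \<Rightarrow> bool" where
  "sturmian w = (\<forall>n. finite (subwords w n) \<and> card (subwords w n) = n + 1)"

text \<open>Variables: even x_i (X i), odd y_i (Y i).  Nonassociative monomials are binary trees.\<close>
datatype var = X nat | Y nat
datatype mon = Leaf var | Node mon mon

fun leaves :: "mon \<Rightarrow> var list" where
  "leaves (Leaf v) = [v]"
| "leaves (Node l r) = leaves l @ leaves r"

definition Mons :: "nat \<Rightarrow> nat \<Rightarrow> mon set" where
  "Mons k l = {M. mset (leaves M) = mset (map X [1..<k + 1] @ map Y [1..<l + 1])}"

definition Pspace :: "'f itself \<Rightarrow> nat \<Rightarrow> nat \<Rightarrow> (mon \<Rightarrow> 'f::field) set" where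
  "Pspace F k l = {f. \<forall>M. f M \<noteq> 0 \<longrightarrow> M \<in> Mons k l}"

fun eval_mon :: "nat \<Rightarrow> (nat \<Rightarrow> nat) \<Rightarrow> (nat \<Rightarrow> bidx \<Rightarrow> 'f::field) \<Rightarrow> (nat \<Rightarrow> bidx \<Rightarrow> 'f)
    \<Rightarrow> mon \<Rightarrow> bidx \<Rightarrow> 'f" where
  "eval_mon m w \<phi> \<psi> (Leaf (X i)) = \<phi> i"
| "eval_mon m w \<phi> \<psi> (Leaf (Y i)) = \<psi> i"
| "eval_mon m w \<phi> \<psi> (Node M N) = amult m w (eval_mon m w \<phi> \<psi> M) (eval_mon m w \<phi> \<psi> N)"

definition eval_poly :: "nat \<Rightarrow> (nat \<Rightarrow> nat) \<Rightarrow> nat \<Rightarrow> nat \<Rightarrow> (mon \<Rightarrow> 'f::field)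
    \<Rightarrow> (nat \<Rightarrow> bidx \<Rightarrow> 'f) \<Rightarrow> (nat \<Rightarrow> bidx \<Rightarrow> 'f) \<Rightarrow> bidx \<Rightarrow> 'f" where
  "eval_poly m w k l f \<phi> \<psi> = (\<lambda>t. \<Sum>M\<in>Mons k l. f M * eval_mon m w \<phi> \<psi> M t)"

definition is_gr_identity :: "nat \<Rightarrow> (nat \<Rightarrow> nat) \<Rightarrow> nat \<Rightarrow> nat \<Rightarrow> (mon \<Rightarrow> 'f::field) \<Rightarrow> bool" where
  "is_gr_identity m w k l f =
     (\<forall>\<phi> \<psi>. (\<forall>i. \<phi> i \<in> A0 m w) \<longrightarrow> (\<forall>i. \<psi> i \<in> A1 m w) \<longrightarrow>
        eval_poly m w k l f \<phi> \<psi> = (\<lambda>_. 0))"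

definition indep_mod_id :: "nat \<Rightarrow> (nat \<Rightarrow> nat) \<Rightarrow> nat \<Rightarrow> nat \<Rightarrow> (mon \<Rightarrow> 'f::field) set \<Rightarrow> bool" where
  "indep_mod_id m w k l S =
     (\<forall>c :: (mon \<Rightarrow> 'f) \<Rightarrow> 'f.
        is_gr_identity m w k l (\<lambda>M. \<Sum>f\<in>S. c f * f M) \<longrightarrow> (\<forall>f\<in>S. c f = 0))"

text \<open>c_{k,l}(A) = dim P_{k,l} / (P_{k,l} \<inter> Id^gr(A)).\<close>
definition gr_codim :: "'f::field itself \<Rightarrow> nat \<Rightarrow> (nat \<Rightarrow> nat) \<Rightarrow> nat \<Rightarrow> nat \<Rightarrow> nat" where
  "gr_codim F m w k l =
     Max {card S | S :: (mon \<Rightarrow> 'f) set. finite S \<and> S \<subseteq> Pspace F k l \<and> indep_mod_id m w k l S}"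

end

theory Submission imports Defs "HOL-Library.Function_Algebras" "HOL.Vector_Spaces" begin

interpretation fvs: vector_space "\<lambda>(c::'f::field) (v::'k \<Rightarrow> 'f). (\<lambda>x. c * v x)"
  by unfold_locales (auto simp: fun_eq_iff algebra_simps)

lemma sum_apply: "(sum f A) x = sum (\<lambda>a. f a x) A"
  by (induction A rule: infinite_finite_induct) auto

lemma abstract_bound:
  fixes vec :: "('a \<Rightarrow> 'f::field) \<Rightarrow> ('k \<Rightarrow> 'f)" and Idp :: "('a \<Rightarrow> 'f) \<Rightarrow> bool"
  assumes G: "finite G"
    and out: "\<And>f \<kappa>. \<kappa> \<notin> G \<Longrightarrow> vec f \<kappa> = 0"
    and lin: "\<And>S c. finite S \<Longrightarrow> vec (\<lambda>M. \<Sum>f\<in>S. c f * f M) = (\<lambda>\<kappa>. \<Sum>f\<in>S. c f * vec f \<kappa>)"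
    and idp: "\<And>g. vec g = (\<lambda>_. 0) \<Longrightarrow> Idp g"
    and S: "finite S"
    and ind: "\<forall>c :: ('a \<Rightarrow> 'f) \<Rightarrow> 'f. Idp (\<lambda>M. \<Sum>f\<in>S. c f * f M) \<longrightarrow> (\<forall>f\<in>S. c f = 0)"
  shows "card S \<le> card G"
proof -
  define B where "B = (\<lambda>\<kappa>. (\<lambda>x. if x = \<kappa> then (1::'f) else 0)) ` G"
  have inj: "inj_on vec S"
  proof (rule inj_onI, rule ccontr)
    fix f g assume f: "f \<in> S" and g: "g \<in> S" and e: "vec f = vec g" and ne: "f \<noteq> g"
    define c where "c = (\<lambda>h. if h = f then (1::'f) else if h = g then -1 else 0)"
    have "vec (\<lambda>M. \<Sum>h\<in>S. c h * h M) = (\<lambda>\<kappa>. \<Sum>h\<in>S. c h * vec h \<kappa>)" using lin S by blast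
    also have "\<dots> = (\<lambda>\<kappa>. vec f \<kappa> - vec g \<kappa>)"
    proof
      fix \<kappa>
      have "(\<Sum>h\<in>S. c h * vec h \<kappa>) = (\<Sum>h\<in>{f,g}. c h * vec h \<kappa>)"
        by (rule sum.mono_neutral_right) (use S f g c_def in auto)
      also have "\<dots> = vec f \<kappa> - vec g \<kappa>" using ne by (simp add: c_def)
      finally show "(\<Sum>h\<in>S. c h * vec h \<kappa>) = vec f \<kappa> - vec g \<kappa>" .
    qed
    also have "\<dots> = (\<lambda>_. 0)" using e by simp
    finally have "Idp (\<lambda>M. \<Sum>h\<in>S. c h * h M)" by (rule idp)
    with ind f have "c f = 0" by blast
    thus False by (simp add: c_def)
  qed
  have indep: "fvs.independent (vec ` S)"
    unfolding fvs.dependent_explicit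
  proof (intro notI, elim exE conjE bexE)
    fix T u v assume T: "finite T" "T \<subseteq> vec ` S" and sum0: "(\<Sum>v\<in>T. (\<lambda>x. u v * v x)) = 0"
      and vT: "v \<in> T" and uv: "u v \<noteq> 0"
    define c where "c = (\<lambda>h. if vec h \<in> T then u (vec h) else 0)"
    have "vec (\<lambda>M. \<Sum>h\<in>S. c h * h M) = (\<lambda>\<kappa>. \<Sum>h\<in>S. c h * vec h \<kappa>)" using lin S by blast
    also have "\<dots> = (\<lambda>\<kappa>. \<Sum>h\<in>{h\<in>S. vec h \<in> T}. u (vec h) * vec h \<kappa>)"
      by (rule ext, rule sum.mono_neutral_cong_right) (use S c_def in auto)
    also have "\<dots> = (\<lambda>\<kappa>. \<Sum>v\<in>T. u v * v \<kappa>)"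
    proof (rule ext)
      fix \<kappa>
      have "T = vec ` {h\<in>S. vec h \<in> T}" using T by auto
      moreover have "inj_on vec {h\<in>S. vec h \<in> T}" using inj by (rule inj_on_subset) auto
      ultimately show "(\<Sum>h\<in>{h\<in>S. vec h \<in> T}. u (vec h) * vec h \<kappa>) = (\<Sum>v\<in>T. u v * v \<kappa>)"
        by (metis (no_types, lifting) sum.reindex_cong)
    qed
    also have "\<dots> = (\<lambda>_. 0)" using sum0 by (simp add: fun_eq_iff sum_apply)
    finally have "Idp (\<lambda>M. \<Sum>h\<in>S. c h * h M)" by (rule idp)
    with ind have c0: "\<forall>h\<in>S. c h = 0" by blast
    from vT T obtain h where "h \<in> S" "v = vec h" by auto
    with c0 vT uv show False by (auto simp: c_def)
  qed
  have span: "vec ` S \<subseteq> fvs.span B"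
  proof
    fix v assume "v \<in> vec ` S"
    then obtain f where v: "v = vec f" by auto
    have "v = (\<Sum>\<kappa>\<in>G. (\<lambda>x. v \<kappa> * (if x = \<kappa> then 1 else 0)))"
    proof (rule ext)
      fix x
      have "(\<Sum>\<kappa>\<in>G. (\<lambda>x. v \<kappa> * (if x = \<kappa> then 1 else 0))) x = (\<Sum>\<kappa>\<in>G. v \<kappa> * (if x = \<kappa> then 1 else 0))"
        by (simp add: sum_apply)
      also have "\<dots> = (if x \<in> G then v x else 0)"
        using G by (simp add: if_distrib sum.delta cong: if_cong)
      also have "\<dots> = v x" using out v by auto
      finally show "v x = (\<Sum>\<kappa>\<in>G. (\<lambda>x. v \<kappa> * (if x = \<kappa> then 1 else 0))) x" by simp
    qed
    also have "\<dots> \<in> fvs.span B"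
      by (rule fvs.span_sum, rule fvs.span_scale, rule fvs.span_base) (auto simp: B_def)
    finally show "v \<in> fvs.span B" .
  qed
  have "card (vec ` S) \<le> card B"
    using fvs.independent_span_bound[OF _ indep span] G by (simp add: B_def)
  moreover have "card B \<le> card G" unfolding B_def by (rule card_image_le[OF G])
  moreover have "card (vec ` S) = card S" using inj by (rule card_image)
  ultimately show ?thesis by simp
qed


fun par :: "var \<Rightarrow> bool" where "par (X _) = True" | "par (Y _) = False"

fun lnorm :: "mon \<Rightarrow> (var \<times> var list) option" where
  "lnorm (Leaf v) = Some (v, [])"
| "lnorm (Node l (Leaf v)) = map_option (\<lambda>(h, r). (h, r @ [v])) (lnorm l)"
| "lnorm (Node l (Node _ _)) = None"

definition sh :: "nat \<Rightarrow> (nat \<Rightarrow> nat) \<Rightarrow> bool \<Rightarrow> (bidx \<Rightarrow> 'f::field) \<Rightarrow> bidx \<Rightarrow> 'f" where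
  "sh m w c u = (\<lambda>t. \<Sum>s\<in>supp u. if bprod m w s (if c then Ba else Bb) = Some t then u s else 0)"

definition shs :: "nat \<Rightarrow> (nat \<Rightarrow> nat) \<Rightarrow> bool list \<Rightarrow> (bidx \<Rightarrow> 'f::field) \<Rightarrow> bidx \<Rightarrow> 'f" where
  "shs m w ps u = fold (sh m w) ps u"

fun coef :: "(nat \<Rightarrow> bidx \<Rightarrow> 'f::field) \<Rightarrow> (nat \<Rightarrow> bidx \<Rightarrow> 'f) \<Rightarrow> var \<Rightarrow> 'f" where
  "coef \<phi> \<psi> (X i) = \<phi> i Ba" | "coef \<phi> \<psi> (Y i) = \<psi> i Bb"

fun val :: "(nat \<Rightarrow> bidx \<Rightarrow> 'f::field) \<Rightarrow> (nat \<Rightarrow> bidx \<Rightarrow> 'f) \<Rightarrow> var \<Rightarrow> bidx \<Rightarrow> 'f" where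
  "val \<phi> \<psi> (X i) = \<phi> i" | "val \<phi> \<psi> (Y i) = \<psi> i"

fun bwalk :: "nat \<Rightarrow> (nat \<Rightarrow> nat) \<Rightarrow> bidx \<Rightarrow> bool list \<Rightarrow> bidx option" where
  "bwalk m w s [] = Some s"
| "bwalk m w s (c # cs) = (case bprod m w s (if c then Ba else Bb) of None \<Rightarrow> None | Some s' \<Rightarrow> bwalk m w s' cs)"

fun walk :: "nat \<Rightarrow> (nat \<Rightarrow> nat) \<Rightarrow> nat \<Rightarrow> nat \<Rightarrow> nat \<Rightarrow> bool list" where
  "walk m w i j 0 = []"
| "walk m w i j (Suc L) = (if j < m + w i then True # walk m w i (j + 1) L else False # walk m w (i + 1) 1 L)"

lemma bprod_Z: "bprod m w s r = Some t \<Longrightarrow> \<exists>i j. t = Z i j"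
  by (cases s; cases r) (auto split: if_splits)

lemma bprod_rZ: "bprod m w s (Z i j) = None"
  by (cases s) auto

lemma bprod_Ba: "bprod m w Ba r = None" and bprod_Bb: "bprod m w Bb r = None"
  by auto

lemma amult_range: "amult m w u v t \<noteq> 0 \<Longrightarrow> \<exists>i j. t = Z i j"
proof (rule ccontr)
  assume a: "amult m w u v t \<noteq> 0" and n: "\<not> (\<exists>i j. t = Z i j)"
  have "amult m w u v t = 0" unfolding amult_def
    by (rule sum.neutral) (use n bprod_Z in fastforce)
  with a show False by simp
qed

lemma amult_Z: "(\<forall>r\<in>supp v. \<exists>i j. r = Z i j) \<Longrightarrow> amult m w u v = (\<lambda>_. 0)"
  unfolding amult_def by (rule ext, rule sum.neutral) (auto simp: bprod_rZ)

lemma amult_zero_left: "amult m w (\<lambda>_. 0) v = (\<lambda>_. 0)"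
  unfolding amult_def supp_def by simp

lemma eval_None: "lnorm M = None \<Longrightarrow> eval_mon m w \<phi> \<psi> M = (\<lambda>_. 0)"
proof (induction M)
  case (Leaf x) thus ?case by simp
next
  case (Node l r)
  show ?case
  proof (cases r)
    case (Leaf v)
    with Node.prems have "lnorm l = None" by simp
    with Node.IH(1) have "eval_mon m w \<phi> \<psi> l = (\<lambda>_. 0)" by simp
    thus ?thesis by (simp add: amult_zero_left)
  next
    case (Node a b)
    have "\<forall>s\<in>supp (eval_mon m w \<phi> \<psi> r). \<exists>i j. s = Z i j"
      using Node amult_range unfolding supp_def by fastforce
    then show ?thesis by (simp add: amult_Z)
  qed
qed

lemma A0_fin: "v \<in> A0 m w \<Longrightarrow> finite (supp v)" and A1_fin: "v \<in> A1 m w \<Longrightarrow> finite (supp v)"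
  by (auto simp: A0_def A1_def Aelem_def)

lemma amult_lin:
  assumes fu: "finite (supp u)" and fv: "finite (supp v)"
    and sv: "\<forall>r\<in>supp v. r = c0 \<or> (\<exists>i j. r = Z i j)"
  shows "amult m w u v t = v c0 * (\<Sum>s\<in>supp u. if bprod m w s c0 = Some t then u s else 0)"
proof -
  have "amult m w u v t = (\<Sum>s\<in>supp u. \<Sum>r\<in>supp v. if bprod m w s r = Some t then u s * v r else 0)"
    unfolding amult_def by (simp add: sum.cartesian_product)
  also have "\<dots> = (\<Sum>s\<in>supp u. \<Sum>r\<in>supp v. if r = c0 then (if bprod m w s c0 = Some t then u s * v c0 else 0) else 0)"
    by (rule sum.cong[OF refl], rule sum.cong[OF refl]) (use sv bprod_rZ in fastforce)
  also have "\<dots> = (\<Sum>s\<in>supp u. if bprod m w s c0 = Some t then u s * v c0 else 0)"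
    using fv by (simp add: sum.delta) (auto simp: supp_def intro!: sum.cong)
  also have "\<dots> = v c0 * (\<Sum>s\<in>supp u. if bprod m w s c0 = Some t then u s else 0)"
    by (simp add: sum_distrib_left if_distrib mult.commute cong: if_cong)
  finally show ?thesis .
qed

lemma amult_A0: "v \<in> A0 m w \<Longrightarrow> finite (supp u) \<Longrightarrow> amult m w u v = (\<lambda>t. v Ba * sh m w True u t)"
  unfolding sh_def if_True by (rule ext, rule amult_lin) (auto simp: A0_def Aelem_def)

lemma amult_A1: "v \<in> A1 m w \<Longrightarrow> finite (supp u) \<Longrightarrow> amult m w u v = (\<lambda>t. v Bb * sh m w False u t)"
  unfolding sh_def if_False by (rule ext, rule amult_lin) (auto simp: A1_def Aelem_def)

lemma supp_scale: "supp (\<lambda>t. a * u t) = (if a = 0 then {} else supp u)"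
  by (auto simp: supp_def)

lemma sh_scale: "sh m w c (\<lambda>t. a * u t) = (\<lambda>t. a * sh m w c u t)"
proof (cases "a = 0")
  case True thus ?thesis by (simp add: sh_def supp_scale)
next
  case False
  show ?thesis unfolding sh_def supp_scale using False
    by (simp add: sum_distrib_left if_distrib cong: if_cong)
qed

lemma sh_supp: "supp (sh m w c u) \<subseteq> (\<lambda>s. the (bprod m w s (if c then Ba else Bb))) ` supp u"
proof
  fix t assume "t \<in> supp (sh m w c u)"
  then have "(\<Sum>s\<in>supp u. if bprod m w s (if c then Ba else Bb) = Some t then u s else 0) \<noteq> 0"
    by (simp add: supp_def sh_def)
  then obtain s where "s \<in> supp u" "(if bprod m w s (if c then Ba else Bb) = Some t then u s else 0) \<noteq> 0"
    by (rule sum.not_neutral_contains_not_neutral)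
  then have "s \<in> supp u" "bprod m w s (if c then Ba else Bb) = Some t" by (auto split: if_splits)
  thus "t \<in> (\<lambda>s. the (bprod m w s (if c then Ba else Bb))) ` supp u" by force
qed

lemma sh_fin: "finite (supp u) \<Longrightarrow> finite (supp (sh m w c u))"
  by (rule finite_subset[OF sh_supp]) simp

lemma shs_simps: "shs m w [] u = u" "shs m w (c # cs) u = shs m w cs (sh m w c u)"
  "shs m w (cs @ [c]) u = sh m w c (shs m w cs u)"
  by (auto simp: shs_def)

lemma shs_scale: "shs m w ps (\<lambda>t. a * u t) = (\<lambda>t. a * shs m w ps u t)"
  by (induction ps arbitrary: u) (auto simp: shs_simps sh_scale)

lemma shs_fin: "finite (supp u) \<Longrightarrow> finite (supp (shs m w ps u))"
  by (induction ps arbitrary: u) (auto simp: shs_simps sh_fin)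

lemma shs_nz: "shs m w ps u t \<noteq> 0 \<Longrightarrow> \<exists>s\<in>supp u. bwalk m w s ps = Some t"
proof (induction ps arbitrary: u)
  case Nil thus ?case by (auto simp: shs_simps supp_def)
next
  case (Cons c cs)
  then obtain s' where s': "s' \<in> supp (sh m w c u)" "bwalk m w s' cs = Some t"
    by (auto simp: shs_simps)
  then have "(\<Sum>s\<in>supp u. if bprod m w s (if c then Ba else Bb) = Some s' then u s else 0) \<noteq> 0"
    by (simp add: supp_def sh_def)
  then obtain s where "s \<in> supp u" "(if bprod m w s (if c then Ba else Bb) = Some s' then u s else 0) \<noteq> 0"
    by (rule sum.not_neutral_contains_not_neutral)
  then have "s \<in> supp u" "bprod m w s (if c then Ba else Bb) = Some s'" by (auto split: if_splits)
  with s' show ?case by (intro bexI[of _ s]) auto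
qed

lemma eval_Some:
  assumes \<phi>: "\<forall>i. \<phi> i \<in> A0 m w" and \<psi>: "\<forall>i. \<psi> i \<in> A1 m w"
  shows "lnorm M = Some (h, r) \<Longrightarrow>
    eval_mon m w \<phi> \<psi> M = (\<lambda>t. prod_list (map (coef \<phi> \<psi>) r) * shs m w (map par r) (val \<phi> \<psi> h) t)"
proof (induction M arbitrary: h r)
  case (Leaf x)
  then show ?case by (cases x) (auto simp: shs_simps)
next
  case (Node l rr)
  show ?case
  proof (cases rr)
    case (Leaf v)
    with Node.prems obtain r0 where l: "lnorm l = Some (h, r0)" and r: "r = r0 @ [v]" by auto
    have ev: "eval_mon m w \<phi> \<psi> l = (\<lambda>t. prod_list (map (coef \<phi> \<psi>) r0) * shs m w (map par r0) (val \<phi> \<psi> h) t)"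
      using Node.IH(1)[OF l] .
    have vh: "finite (supp (val \<phi> \<psi> h))" using \<phi> \<psi> by (cases h) (auto intro: A0_fin A1_fin)
    have fin: "finite (supp (eval_mon m w \<phi> \<psi> l))"
      unfolding ev supp_scale using shs_fin[OF vh] by auto
    show ?thesis
    proof (cases v)
      case (X i)
      have e1: "eval_mon m w \<phi> \<psi> (Node l rr) = (\<lambda>t. \<phi> i Ba * sh m w True (eval_mon m w \<phi> \<psi> l) t)"
        using Leaf X amult_A0[OF \<phi>[rule_format] fin] by simp
      have e2: "sh m w True (eval_mon m w \<phi> \<psi> l) = (\<lambda>t. prod_list (map (coef \<phi> \<psi>) r0) * sh m w True (shs m w (map par r0) (val \<phi> \<psi> h)) t)"
        by (simp only: ev sh_scale)
      have e3: "shs m w (map par r) (val \<phi> \<psi> h) = sh m w True (shs m w (map par r0) (val \<phi> \<psi> h))"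
        using X r by (simp add: shs_simps)
      have e4: "prod_list (map (coef \<phi> \<psi>) r) = prod_list (map (coef \<phi> \<psi>) r0) * \<phi> i Ba"
        using X r by simp
      show ?thesis unfolding e1 e2 e3 e4 by (rule ext) (simp only: ac_simps)
    next
      case (Y i)
      have e1: "eval_mon m w \<phi> \<psi> (Node l rr) = (\<lambda>t. \<psi> i Bb * sh m w False (eval_mon m w \<phi> \<psi> l) t)"
        using Leaf Y amult_A1[OF \<psi>[rule_format] fin] by simp
      have e2: "sh m w False (eval_mon m w \<phi> \<psi> l) = (\<lambda>t. prod_list (map (coef \<phi> \<psi>) r0) * sh m w False (shs m w (map par r0) (val \<phi> \<psi> h)) t)"
        by (simp only: ev sh_scale)
      have e3: "shs m w (map par r) (val \<phi> \<psi> h) = sh m w False (shs m w (map par r0) (val \<phi> \<psi> h))"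
        using Y r by (simp add: shs_simps)
      have e4: "prod_list (map (coef \<phi> \<psi>) r) = prod_list (map (coef \<phi> \<psi>) r0) * \<psi> i Bb"
        using Y r by simp
      show ?thesis unfolding e1 e2 e3 e4 by (rule ext) (simp only: ac_simps)
    qed
  next
    case (Node a b)
    with Node.prems show ?thesis by simp
  qed
qed

lemma lnorm_leaves: "lnorm M = Some (h, r) \<Longrightarrow> leaves M = h # r"
proof (induction M arbitrary: h r)
  case (Leaf x) thus ?case by simp
next
  case (Node l rr)
  thus ?case by (cases rr) auto
qed

lemma bwalk_B: "s = Ba \<or> s = Bb \<Longrightarrow> bwalk m w s ps \<noteq> None \<Longrightarrow> ps = []"
  by (cases ps) auto

lemma bwalk_walk: "1 \<le> m \<Longrightarrow> j \<le> m + w i \<Longrightarrow> bwalk m w (Z i j) ps \<noteq> None \<Longrightarrow> ps = walk m w i j (length ps)"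
proof (induction ps arbitrary: i j)
  case Nil thus ?case by simp
next
  case (Cons c cs)
  show ?case
  proof (cases "j < m + w i")
    case True
    with Cons.prems have c: c by (cases c) auto
    with True Cons.prems have "bwalk m w (Z i (j+1)) cs \<noteq> None" by simp
    with Cons.IH[of "j+1" i] True Cons.prems c show ?thesis by simp
  next
    case False
    with Cons.prems have j: "j = m + w i" by simp
    with Cons.prems have c: "\<not> c" by (cases c) auto
    with j Cons.prems have "bwalk m w (Z (i+1) 1) cs \<noteq> None" by simp
    with Cons.IH[of 1 "i+1"] j Cons.prems c show ?thesis by simp
  qed
qed

lemma walk_agree: "(\<forall>d. m * d < L + j \<longrightarrow> w (i + d) = w (i' + d)) \<Longrightarrow> walk m w i j L = walk m w i' j L"
proof (induction L arbitrary: i i' j)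
  case 0 thus ?case by simp
next
  case (Suc L)
  have w0: "w i = w i'" using Suc.prems[rule_format, of 0] by simp
  show ?case
  proof (cases "j < m + w i")
    case True
    have "walk m w i (j+1) L = walk m w i' (j+1) L"
      by (rule Suc.IH) (use Suc.prems in auto)
    with True w0 show ?thesis by simp
  next
    case False
    have "walk m w (i+1) 1 L = walk m w (i'+1) 1 L"
    proof (rule Suc.IH, intro allI impI)
      fix d assume "m * d < L + 1"
      with False have "m * (d+1) < Suc L + j" by simp
      with Suc.prems show "w (i + 1 + d) = w (i' + 1 + d)" by (metis add.assoc add.commute)
    qed
    with False w0 show ?thesis by simp
  qed
qed


definition keyM :: "mon \<Rightarrow> (var \<times> bool list) option" where
  "keyM M = map_option (\<lambda>(h, r). (h, map par r)) (lnorm M)"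

definition Vs :: "nat \<Rightarrow> nat \<Rightarrow> var set" where
  "Vs k l = X ` {1..k} \<union> Y ` {1..l}"

definition qq :: "nat \<Rightarrow> nat \<Rightarrow> nat" where "qq m n = (n - 1) div m + 2"

definition pick :: "(nat \<Rightarrow> nat) \<Rightarrow> nat \<Rightarrow> nat list \<Rightarrow> nat" where
  "pick w q u = (SOME i. i \<ge> 1 \<and> map w [i..<i+q] = u)"

definition RW :: "nat \<Rightarrow> (nat \<Rightarrow> nat) \<Rightarrow> nat \<Rightarrow> bool list set" where
  "RW m w n = (\<lambda>(j, u). walk m w (pick w (qq m n) u) j (n - 1)) ` ({1..m+1} \<times> subwords w (qq m n))"

definition GG :: "nat \<Rightarrow> (nat \<Rightarrow> nat) \<Rightarrow> nat \<Rightarrow> nat \<Rightarrow> (var \<times> bool list) set" where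
  "GG m w k l = Vs k l \<times> RW m w (k + l)"

lemma Mons_leaves:
  assumes "M \<in> Mons k l" "lnorm M = Some (h, r)"
  shows "h \<in> Vs k l" "length r = k + l - 1" "mset (h # r) = mset (map X [1..<k + 1] @ map Y [1..<l + 1])"
proof -
  have lv: "leaves M = h # r" using assms(2) by (rule lnorm_leaves)
  show ms: "mset (h # r) = mset (map X [1..<k + 1] @ map Y [1..<l + 1])"
    using assms(1) lv by (simp add: Mons_def)
  have "h \<in> set_mset (mset (h # r))" by simp
  then have "h \<in> set (map X [1..<k + 1] @ map Y [1..<l + 1])" by (simp only: ms set_mset_mset)
  then show "h \<in> Vs k l" by (auto simp: Vs_def)
  have "size (mset (h # r)) = k + l" by (simp only: ms) simp
  then show "length r = k + l - 1" by simp
qed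

lemma div_bound: "0 < (m::nat) \<Longrightarrow> m * d < L + m + 1 \<Longrightarrow> d < L div m + 2"
proof -
  assume m: "0 < m" and h: "m * d < L + m + 1"
  show "d < L div m + 2"
  proof (cases d)
    case 0 thus ?thesis by simp
  next
    case (Suc e)
    with h have "e * m \<le> L" by (simp add: algebra_simps)
    with m have "e \<le> L div m" by (simp add: less_eq_div_iff_mult_less_eq)
    with Suc show ?thesis by simp
  qed
qed

lemma nz:
  assumes m: "m \<ge> 2" and bw: "binary_word w"
    and \<phi>: "\<forall>i. \<phi> i \<in> A0 m w" and \<psi>: "\<forall>i. \<psi> i \<in> A1 m w"
    and M: "M \<in> Mons k l" and ne: "eval_mon m w \<phi> \<psi> M t \<noteq> 0"
  shows "keyM M \<in> Some ` GG m w k l"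
proof -
  have "lnorm M \<noteq> None"
  proof
    assume "lnorm M = None"
    then have "eval_mon m w \<phi> \<psi> M = (\<lambda>_. 0)" by (rule eval_None)
    with ne show False by simp
  qed
  then obtain h r where ln: "lnorm M = Some (h, r)" by auto
  note Lv = Mons_leaves[OF M ln]
  define L where "L = k + l - 1"
  define q where "q = qq m (k + l)"
  have q: "q = L div m + 2" by (simp add: q_def qq_def L_def)
  have lr: "length (map par r) = L" using Lv(2) by (simp add: L_def)
  have "shs m w (map par r) (val \<phi> \<psi> h) t \<noteq> 0"
    using ne eval_Some[OF \<phi> \<psi> ln] by auto
  then obtain s where s: "s \<in> supp (val \<phi> \<psi> h)" and bws: "bwalk m w s (map par r) = Some t"
    using shs_nz by blast
  have "val \<phi> \<psi> h \<in> Aelem m w" using \<phi> \<psi> by (cases h) (auto simp: A0_def A1_def)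
  with s have vs: "valid_basis m w s" by (auto simp: Aelem_def)
  have sw: "map w [i..<i+q] \<in> subwords w q" if "i \<ge> 1" for i
    using that by (auto simp: subwords_def)
  have "\<exists>j u. j \<in> {1..m+1} \<and> u \<in> subwords w q \<and> map par r = walk m w (pick w q u) j L"
  proof (cases s)
    case Ba
    with bws have "map par r = []" using bwalk_B by blast
    with lr have "L = 0" by simp
    show ?thesis
    proof -
      have sw1: "map w [1..<1+q] \<in> subwords w q" by (rule sw) simp
      have "(1::nat) \<in> {1..m+1}" by simp
      moreover have "map par r = walk m w (pick w q (map w [1..<1+q])) 1 L"
        using \<open>L = 0\<close> \<open>map par r = []\<close> by simp
      ultimately show ?thesis using sw1 by blast
    qed
  next
    case Bb
    with bws have "map par r = []" using bwalk_B by blast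
    with lr have "L = 0" by simp
    show ?thesis
    proof -
      have sw1: "map w [1..<1+q] \<in> subwords w q" by (rule sw) simp
      have "(1::nat) \<in> {1..m+1}" by simp
      moreover have "map par r = walk m w (pick w q (map w [1..<1+q])) 1 L"
        using \<open>L = 0\<close> \<open>map par r = []\<close> by simp
      ultimately show ?thesis using sw1 by blast
    qed
  next
    case (Z i j)
    with vs have ij: "1 \<le> i" "1 \<le> j" "j \<le> m + w i" by (auto simp: valid_basis_def)
    have wi: "w i \<le> 1" using bw ij(1) by (auto simp: binary_word_def)
    have pw: "map par r = walk m w i j L"
      using bwalk_walk[of m j w i "map par r"] m ij bws Z lr by auto
    define u where "u = map w [i..<i+q]"
    have u: "u \<in> subwords w q" using sw ij(1) by (simp add: u_def)
    have "\<exists>i'. i' \<ge> 1 \<and> map w [i'..<i'+q] = u" using ij(1) u_def by blast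
    then have pk: "pick w q u \<ge> 1 \<and> map w [pick w q u..<pick w q u + q] = u"
      unfolding pick_def by (rule someI_ex)
    have "walk m w i j L = walk m w (pick w q u) j L"
    proof (rule walk_agree, intro allI impI)
      fix d assume "m * d < L + j"
      with ij wi have "m * d < L + m + 1" by simp
      with m have dq: "d < q" using div_bound[of m d L] q by simp
      have "w (i + d) = u ! d" using dq by (simp add: u_def)
      also have "\<dots> = w (pick w q u + d)" using dq pk by (metis add_diff_cancel_left' length_map length_upt nth_map nth_upt add_less_cancel_left)
      finally show "w (i + d) = w (pick w q u + d)" .
    qed
    with pw have "map par r = walk m w (pick w q u) j L" by simp
    moreover have "j \<in> {1..m+1}" using ij wi by simp
    ultimately show ?thesis using u by blast
  qed
  then obtain j u where ju: "j \<in> {1..m+1}" "u \<in> subwords w q" "map par r = walk m w (pick w q u) j L"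
    by blast
  have "map par r \<in> RW m w (k + l)"
    unfolding RW_def using ju by (force simp: q_def L_def)
  then show ?thesis using Lv(1) ln by (auto simp: keyM_def GG_def)
qed


lemma samekey:
  assumes \<phi>: "\<forall>i. \<phi> i \<in> A0 m w" and \<psi>: "\<forall>i. \<psi> i \<in> A1 m w"
    and M: "M \<in> Mons k l" and M': "M' \<in> Mons k l" and kk: "keyM M = keyM M'" and kn: "keyM M \<noteq> None"
  shows "eval_mon m w \<phi> \<psi> M = eval_mon m w \<phi> \<psi> M'"
proof -
  obtain h r where ln: "lnorm M = Some (h, r)" using kn by (auto simp: keyM_def)
  have "keyM M' \<noteq> None" using kn kk by simp
  then have "lnorm M' \<noteq> None" by (simp add: keyM_def)
  then obtain h' r' where ln': "lnorm M' = Some (h', r')" by auto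
  have hh: "h' = h" and pp: "map par r' = map par r" using kk ln ln' by (auto simp: keyM_def)
  have "mset (h # r) = mset (h' # r')"
    using Mons_leaves(3)[OF M ln] Mons_leaves(3)[OF M' ln'] by simp
  then have mr: "mset r = mset r'" using hh by simp
  have "prod_list (map (coef \<phi> \<psi>) r) = prod_mset (image_mset (coef \<phi> \<psi>) (mset r))"
    by (simp add: prod_mset_prod_list[symmetric])
  also have "\<dots> = prod_list (map (coef \<phi> \<psi>) r')"
    by (simp add: mr prod_mset_prod_list[symmetric])
  finally have pr: "prod_list (map (coef \<phi> \<psi>) r) = prod_list (map (coef \<phi> \<psi>) r')" .
  show ?thesis
    unfolding eval_Some[OF \<phi> \<psi> ln] eval_Some[OF \<phi> \<psi> ln'] pr pp hh ..
qed

lemma GG_card: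
  assumes "finite (subwords w (qq m (k + l)))"
  shows "finite (GG m w k l) \<and> card (GG m w k l) \<le> (k + l) * ((m + 1) * card (subwords w (qq m (k + l))))"
proof -
  have fV: "finite (Vs k l)" by (simp add: Vs_def)
  have cV: "card (Vs k l) \<le> k + l"
  proof -
    have "card (Vs k l) \<le> card (X ` {1..k}) + card (Y ` {1..l})" unfolding Vs_def by (rule card_Un_le)
    also have "\<dots> \<le> card {1..k} + card {1..l}" by (intro add_mono card_image_le) auto
    finally show ?thesis by simp
  qed
  have fD: "finite ({1..m+1} \<times> subwords w (qq m (k + l)))" using assms by simp
  have fR: "finite (RW m w (k + l))" unfolding RW_def using fD by simp
  have cR: "card (RW m w (k + l)) \<le> (m + 1) * card (subwords w (qq m (k + l)))"
  proof -
    have "card (RW m w (k + l)) \<le> card ({1..m+1} \<times> subwords w (qq m (k + l)))"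
      unfolding RW_def by (rule card_image_le[OF fD])
    also have "\<dots> = (m + 1) * card (subwords w (qq m (k + l)))" by (simp add: card_cartesian_product)
    finally show ?thesis .
  qed
  have "card (GG m w k l) = card (Vs k l) * card (RW m w (k + l))"
    by (simp add: GG_def card_cartesian_product)
  also have "\<dots> \<le> (k + l) * ((m + 1) * card (subwords w (qq m (k + l))))"
    by (rule mult_le_mono[OF cV cR])
  finally show ?thesis using fV fR by (simp add: GG_def)
qed

lemma codim_le:
  assumes m: "m \<ge> 2" and bw: "binary_word w" and fin: "finite (GG m w k l)"
  shows "gr_codim TYPE('f::field_char_0) m w k l \<le> card (GG m w k l)"
proof -
  define G where "G = GG m w k l"
  define Ms where "Ms = Mons k l"
  define vec :: "(mon \<Rightarrow> 'f) \<Rightarrow> (var \<times> bool list \<Rightarrow> 'f)" where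
    "vec = (\<lambda>f \<kappa>. if \<kappa> \<in> G then (\<Sum>M\<in>{M\<in>Ms. keyM M = Some \<kappa>}. f M) else 0)"
  have bound: "card S \<le> card G" if S: "finite S" and ind: "indep_mod_id m w k l S" for S :: "(mon \<Rightarrow> 'f) set"
  proof (rule abstract_bound[where vec = vec and Idp = "is_gr_identity m w k l"])
    show "finite G" using fin by (simp add: G_def)
    show "vec f \<kappa> = 0" if "\<kappa> \<notin> G" for f \<kappa> using that by (simp add: vec_def)
    show "vec (\<lambda>M. \<Sum>f\<in>S. c f * f M) = (\<lambda>\<kappa>. \<Sum>f\<in>S. c f * vec f \<kappa>)" if "finite S" for S c
      unfolding vec_def by (rule ext) (auto simp: sum_distrib_left intro: sum.swap)
    show "finite S" by (rule S)
    show "\<forall>c :: (mon \<Rightarrow> 'f) \<Rightarrow> 'f. is_gr_identity m w k l (\<lambda>M. \<Sum>f\<in>S. c f * f M) \<longrightarrow> (\<forall>f\<in>S. c f = 0)"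
      using ind by (simp add: indep_mod_id_def)
    show "is_gr_identity m w k l g" if vg: "vec g = (\<lambda>_. 0)" for g
      unfolding is_gr_identity_def
    proof (intro allI impI)
      fix \<phi> \<psi> :: "nat \<Rightarrow> bidx \<Rightarrow> 'f"
      assume \<phi>: "\<forall>i. \<phi> i \<in> A0 m w" and \<psi>: "\<forall>i. \<psi> i \<in> A1 m w"
      show "eval_poly m w k l g \<phi> \<psi> = (\<lambda>_. 0)"
      proof (rule ext)
        fix t
        show "eval_poly m w k l g \<phi> \<psi> t = 0"
        proof (cases "finite Ms")
          case False
          then show ?thesis by (simp add: eval_poly_def Ms_def)
        next
          case True
          define Ms' where "Ms' = {M\<in>Ms. keyM M \<in> Some ` G}"
          define E where "E = (\<lambda>y. eval_mon m w \<phi> \<psi> (SOME M. M \<in> Ms' \<and> keyM M = y) t)"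
          have fMs': "finite Ms'" using True by (simp add: Ms'_def)
          have "eval_poly m w k l g \<phi> \<psi> t = (\<Sum>M\<in>Ms. g M * eval_mon m w \<phi> \<psi> M t)"
            by (simp add: eval_poly_def Ms_def)
          also have "\<dots> = (\<Sum>M\<in>Ms'. g M * eval_mon m w \<phi> \<psi> M t)"
          proof (rule sum.mono_neutral_right[OF True])
            show "Ms' \<subseteq> Ms" by (auto simp: Ms'_def)
            show "\<forall>M\<in>Ms - Ms'. g M * eval_mon m w \<phi> \<psi> M t = 0"
              using nz[OF m bw \<phi> \<psi>] by (fastforce simp: Ms'_def Ms_def G_def)
          qed
          also have "\<dots> = (\<Sum>M\<in>Ms'. g M * E (keyM M))"
          proof (rule sum.cong[OF refl])
            fix M assume M: "M \<in> Ms'"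
            then have ex: "\<exists>M'. M' \<in> Ms' \<and> keyM M' = keyM M" by blast
            define M' where "M' = (SOME M'. M' \<in> Ms' \<and> keyM M' = keyM M)"
            have M': "M' \<in> Ms' \<and> keyM M' = keyM M" unfolding M'_def by (rule someI_ex[OF ex])
            have "eval_mon m w \<phi> \<psi> M = eval_mon m w \<phi> \<psi> M'"
              by (rule samekey[OF \<phi> \<psi>]) (use M M' in \<open>auto simp: Ms'_def Ms_def\<close>)
            then show "g M * eval_mon m w \<phi> \<psi> M t = g M * E (keyM M)"
              by (simp add: E_def M'_def)
          qed
          also have "\<dots> = (\<Sum>y\<in>Some ` G. \<Sum>M\<in>{x. x \<in> Ms' \<and> keyM x = y}. g M * E (keyM M))"
            by (rule sum.group[symmetric]) (use fMs' fin in \<open>auto simp: G_def Ms'_def\<close>)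
          also have "\<dots> = 0"
          proof (rule sum.neutral, rule ballI)
            fix y assume "y \<in> Some ` G"
            then obtain \<kappa> where \<kappa>: "\<kappa> \<in> G" "y = Some \<kappa>" by auto
            have "(\<Sum>M\<in>{x. x \<in> Ms' \<and> keyM x = y}. g M * E (keyM M))
                = (\<Sum>M\<in>{M\<in>Ms. keyM M = Some \<kappa>}. g M) * E y"
            proof -
              have "{x. x \<in> Ms' \<and> keyM x = y} = {M\<in>Ms. keyM M = Some \<kappa>}"
                using \<kappa> by (auto simp: Ms'_def)
              then show ?thesis by (simp add: sum_distrib_right \<kappa>(2))
            qed
            also have "(\<Sum>M\<in>{M\<in>Ms. keyM M = Some \<kappa>}. g M) = vec g \<kappa>"
              using \<kappa> by (simp add: vec_def)
            also have "\<dots> = 0" using vg by simp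
            finally show "(\<Sum>M\<in>{x. x \<in> Ms' \<and> keyM x = y}. g M * E (keyM M)) = 0" by simp
          qed
          finally show ?thesis .
        qed
      qed
    qed
  qed
  define A where "A = {card S |S :: (mon \<Rightarrow> 'f) set. finite S \<and> S \<subseteq> Pspace TYPE('f) k l \<and> indep_mod_id m w k l S}"
  have Ab: "\<forall>a\<in>A. a \<le> card G" using bound by (auto simp: A_def)
  have Afin: "finite A" using Ab by (meson finite_nat_set_iff_bounded_le)
  have "0 \<in> A" unfolding A_def
    by (rule CollectI, rule exI[of _ "{}"]) (auto simp: Pspace_def indep_mod_id_def)
  then have "A \<noteq> {}" by auto
  then have "Max A \<le> card G" using Ab Afin by (subst Max_le_iff) auto
  then show ?thesis by (simp add: gr_codim_def A_def G_def)
qed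


lemma codim_main:
  assumes m: "m \<ge> 2" and bw: "binary_word w" and k: "k \<le> n"
    and fs: "finite (subwords w (qq m n))"
  shows "gr_codim TYPE('f::field_char_0) m w k (n - k) \<le> n * ((m + 1) * card (subwords w (qq m n)))"
proof -
  have kl: "k + (n - k) = n" using k by simp
  have g: "finite (GG m w k (n - k)) \<and> card (GG m w k (n - k)) \<le> n * ((m + 1) * card (subwords w (qq m n)))"
    using GG_card[of w m k "n - k"] fs kl by simp
  show ?thesis using codim_le[OF m bw] g le_trans by blast
qed

lemma periodic_shift:
  fixes c :: nat
  assumes p: "\<forall>i\<ge>1. w (i + p) = w i" and i: "i \<ge> 1"
  shows "w (i + c * p) = w i"
proof (induction c)
  case 0 thus ?case by simp
next
  case (Suc c)
  have "w (i + Suc c * p) = w ((i + c * p) + p)" by (simp add: algebra_simps)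
  also have "\<dots> = w (i + c * p)" using p i by simp
  finally show ?case using Suc by simp
qed

lemma periodic_subwords:
  assumes p0: "p > 0" and p: "\<forall>i\<ge>1. w (i + p) = w i"
  shows "finite (subwords w q) \<and> card (subwords w q) \<le> p"
proof -
  have sub: "subwords w q \<subseteq> (\<lambda>i. map w [i..<i+q]) ` {1..p}"
  proof
    fix u assume "u \<in> subwords w q"
    then obtain i where i: "i \<ge> 1" and u: "u = map w [i..<i+q]" by (auto simp: subwords_def)
    define i0 where "i0 = (i - 1) mod p + 1"
    define c where "c = (i - 1) div p"
    have ii: "i = i0 + c * p" using i by (simp add: i0_def c_def)
    have i0: "i0 \<in> {1..p}" using p0 by (simp add: i0_def Suc_leI)
    have wd: "w (i + d) = w (i0 + d)" for d
    proof -
      have "i + d = (i0 + d) + c * p" using ii by simp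
      then have "w (i + d) = w ((i0 + d) + c * p)" by (simp only:)
      also have "\<dots> = w (i0 + d)" by (rule periodic_shift[OF p]) (simp add: i0_def)
      finally show ?thesis .
    qed
    have "map w [i..<i+q] = map w [i0..<i0+q]"
      by (rule nth_equalityI) (auto simp: wd)
    with u i0 show "u \<in> (\<lambda>i. map w [i..<i+q]) ` {1..p}" by auto
  qed
  have "finite (subwords w q)" using finite_subset[OF sub] by simp
  moreover have "card (subwords w q) \<le> p"
    using card_mono[OF _ sub] card_image_le[of "{1..p}" "\<lambda>i. map w [i..<i+q]"] by simp
  ultimately show ?thesis by simp
qed

lemma arith_sturm:
  fixes m n :: nat
  assumes m: "m \<ge> 2" and n: "n \<ge> 6 * m + 6"
  shows "(m + 1) * ((n - 1) div m + 3) \<le> 2 * n"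
proof -
  define d where "d = (n - 1) div m"
  have md: "m * d \<le> n - 1" unfolding d_def by (simp add: mult.commute)
  have "2 * d \<le> m * d" using m by (simp add: mult_right_mono)
  have e: "(m + 1) * (d + 3) = m * d + d + 3 * m + 3" by (simp add: algebra_simps)
  show ?thesis unfolding d_def[symmetric] e using md \<open>2 * d \<le> m * d\<close> n by linarith
qed

theorem lemma1:
  fixes m :: nat and w :: "nat \<Rightarrow> nat"
  assumes "m \<ge> 2"
    and "binary_word w"
    and "periodic_word w \<or> sturmian w"
  shows "\<exists>n0. \<forall>n\<ge>n0. \<forall>k\<le>n.
           gr_codim TYPE('f::field_char_0) m w k (n - k) \<le> 2 * n ^ 2"
  using assms(3)
proof
  assume "periodic_word w"
  then obtain p where p0: "p > 0" and p: "\<forall>i\<ge>1. w (i + p) = w i" by (auto simp: periodic_word_def)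
  show ?thesis
  proof (rule exI[of _ "(m + 1) * p"], intro allI impI)
    fix n k assume n: "(m + 1) * p \<le> n" and k: "k \<le> n"
    note ps = periodic_subwords[OF p0 p, of "qq m n"]
    have "gr_codim TYPE('f) m w k (n - k) \<le> n * ((m + 1) * card (subwords w (qq m n)))"
      using codim_main[OF assms(1,2) k] ps by blast
    also have "\<dots> \<le> n * ((m + 1) * p)" using ps by (intro mult_le_mono) auto
    also have "\<dots> \<le> n * n" using n by (intro mult_le_mono) auto
    also have "\<dots> \<le> 2 * n ^ 2" by (simp add: power2_eq_square)
    finally show "gr_codim TYPE('f) m w k (n - k) \<le> 2 * n ^ 2" .
  qed
next
  assume st: "sturmian w"
  show ?thesis
  proof (rule exI[of _ "6 * m + 6"], intro allI impI)
    fix n k assume n: "6 * m + 6 \<le> n" and k: "k \<le> n"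
    have fs: "finite (subwords w (qq m n))" and cs: "card (subwords w (qq m n)) = qq m n + 1"
      using st by (auto simp: sturmian_def)
    have "gr_codim TYPE('f) m w k (n - k) \<le> n * ((m + 1) * card (subwords w (qq m n)))"
      using codim_main[OF assms(1,2) k fs] .
    also have "\<dots> = n * ((m + 1) * ((n - 1) div m + 3))"
    proof -
      have "qq m n + 1 = (n - 1) div m + 3" by (simp add: qq_def)
      then show ?thesis by (simp only: cs)
    qed
    also have "\<dots> \<le> n * (2 * n)" by (rule mult_le_mono2, rule arith_sturm[OF assms(1) n])
    also have "\<dots> = 2 * n ^ 2" by (simp add: power2_eq_square)
    finally show "gr_codim TYPE('f) m w k (n - k) \<le> 2 * n ^ 2" .
  qed
qed

end
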